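(* For a topological space $X$ let $F_X$ be the right $\Lambda$ $\mathsf{Com}$-module with $F_X(r)=X^{\times r}$ ($r\ge1$), $\Lambda$-operations $\mu_j(x_1,\dots,x_r)=(x_1,\dots,\widehat{x_j},\dots,x_r)$, and right $\mathsf{Com}$-action induced by diagonals (e.g. the binary product acting in the first slot sends $(x_1,\dots,x_r)\mapsto(x_1,x_1,x_2,\dots,x_r)$). Then $X\mapsto F_X$ is right adjoint to the functor $U:\Lambda\mathcal{M}od_{\mathsf{Com}}\to\mathrm{Top}$, $U(\mathcal{M})=\mathcal{M}(1)$: \[U:\Lambda\mathcal{M}od_{\mathsf{Com}}\rightleftarrows\mathrm{Top}:F.\] The same holds with simplicial sets in place of topological spaces.
   Context: $\mathsf{Com}$ is the operad with $\mathsf{Com}(r)$ a point for $r\ge1$ and no arity zero operation. A right $\Lambda$ $\mathsf{Com}$-module is a right $\mathsf{Com}$-module $\mathcal{M}$ with $\mathcal{M}(0)=\emptyset$ equipped with maps $\mu_j:\mathcal{M}(r)\to\mathcal{M}(r-1)$ ($r\ge2$, $1\le j\le r$) such that setting $\mathcal{M}_*(0)=*$, $\mathcal{M}_*(r)=\mathcal{M}(r)$ defines a right module over $\mathsf{Com}_*$ (which has $\mathsf{Com}_*(0)=*$), the $\mu_j$ being the action of the nullary operation in slot $j$. $\Lambda\mathcal{M}od_{\mathsf{Com}}$ is the category of such modules. *)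

theory Defs
  imports "HOL-Analysis.Analysis"
begin

text \<open>Arities are r \<ge> 1; slots are 0-indexed (slot i of arity r means i < r).
  A permutation of arity r is a function nat \<Rightarrow> nat that permutes {..<r}.
  The right symmetric action is written act r \<sigma> x (= x\<cdot>\<sigma>), so that
  act r \<sigma> (act r \<tau> x) = act r (\<tau> \<circ> \<sigma>) x.
  cmp r i s x  is  x \<circ>_i p_s  where p_s is the unique point of Com_*(s), s \<ge> 0;
  the case s = 0 is the operation mu_i of the Lambda-structure.  Operations landing in
  arity 0 (where M_*(0) = * ) are omitted, being trivial.\<close>

text \<open>delta i s: the map [r+s-1] \<rightarrow> [r] collapsing the block [i,i+s) onto i
  (for s = 0 the injection skipping i).\<close>
definition delta :: "nat \<Rightarrow> nat \<Rightarrow> nat \<Rightarrow> nat" where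
  "delta i s k = (if k < i then k else if k < i + s then i else k + 1 - s)"

text \<open>Block permutation \<sigma> \<circ>_i id_s in Sigma_(r+s-1).\<close>
definition blkperm :: "nat \<Rightarrow> (nat \<Rightarrow> nat) \<Rightarrow> nat \<Rightarrow> nat \<Rightarrow> nat \<Rightarrow> nat" where
  "blkperm r \<sigma> i s k =
     (if k < r + s - 1 then
        (let m = \<sigma> (delta i s k);
             st = (if m \<le> \<sigma> i then m else m + s - 1)
         in st + (if i \<le> k \<and> k < i + s then k - i else 0))
      else k)"

text \<open>Block permutation id_r \<circ>_i \<tau> in Sigma_(r+s-1), for \<tau> in Sigma_s.\<close>
definition idblk :: "nat \<Rightarrow> (nat \<Rightarrow> nat) \<Rightarrow> nat \<Rightarrow> nat \<Rightarrow> nat" where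
  "idblk i \<tau> s k = (if k < i then k else if k < i + s then i + \<tau> (k - i) else k)"

text \<open>Set-level right Lambda-Com-module (= right Com_*-module with M_*(0) = *, M(0) empty),
  on carriers C r, r \<ge> 1, via the partial composition axioms for the operad Com_*.\<close>
definition lcm_mod ::
  "(nat \<Rightarrow> 'm set) \<Rightarrow> (nat \<Rightarrow> (nat \<Rightarrow> nat) \<Rightarrow> 'm \<Rightarrow> 'm) \<Rightarrow> (nat \<Rightarrow> nat \<Rightarrow> nat \<Rightarrow> 'm \<Rightarrow> 'm) \<Rightarrow> bool" where
  "lcm_mod C act cmp \<longleftrightarrow>
     (\<forall>r \<sigma> x. 1 \<le> r \<and> \<sigma> permutes {..<r} \<and> x \<in> C r \<longrightarrow> act r \<sigma> x \<in> C r) \<and>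
     (\<forall>r i s x. i < r \<and> 2 \<le> r + s \<and> x \<in> C r \<longrightarrow> cmp r i s x \<in> C (r + s - 1)) \<and>
     (\<forall>r x. 1 \<le> r \<and> x \<in> C r \<longrightarrow> act r id x = x) \<and>
     (\<forall>r \<sigma> \<tau> x. 1 \<le> r \<and> \<sigma> permutes {..<r} \<and> \<tau> permutes {..<r} \<and> x \<in> C r \<longrightarrow>
         act r \<sigma> (act r \<tau> x) = act r (\<tau> \<circ> \<sigma>) x) \<and>
     (\<forall>r i x. i < r \<and> x \<in> C r \<longrightarrow> cmp r i 1 x = x) \<and>
     (\<forall>r i s j t x. i < r \<and> j < s \<and> 3 \<le> r + s + t \<and> x \<in> C r \<longrightarrow>
         cmp (r + s - 1) (i + j) t (cmp r i s x) = cmp r i (s + t - 1) x) \<and>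
     (\<forall>r i k s t x. i < k \<and> k < r \<and> 2 \<le> r + s \<and> 2 \<le> r + t \<and> 3 \<le> r + s + t \<and> x \<in> C r \<longrightarrow>
         cmp (r + s - 1) (k + s - 1) t (cmp r i s x) = cmp (r + t - 1) i s (cmp r k t x)) \<and>
     (\<forall>r \<sigma> i s x. \<sigma> permutes {..<r} \<and> i < r \<and> 2 \<le> r + s \<and> x \<in> C r \<longrightarrow>
         cmp r i s (act r \<sigma> x) = act (r + s - 1) (blkperm r \<sigma> i s) (cmp r (\<sigma> i) s x)) \<and>
     (\<forall>r i s \<tau> x. i < r \<and> 1 \<le> s \<and> \<tau> permutes {..<s} \<and> x \<in> C r \<longrightarrow>
         act (r + s - 1) (idblk i \<tau> s) (cmp r i s x) = cmp r i s x)"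

definition lcm_hom ::
  "(nat \<Rightarrow> 'm set) \<Rightarrow> (nat \<Rightarrow> (nat \<Rightarrow> nat) \<Rightarrow> 'm \<Rightarrow> 'm) \<Rightarrow> (nat \<Rightarrow> nat \<Rightarrow> nat \<Rightarrow> 'm \<Rightarrow> 'm) \<Rightarrow>
   (nat \<Rightarrow> 'n set) \<Rightarrow> (nat \<Rightarrow> (nat \<Rightarrow> nat) \<Rightarrow> 'n \<Rightarrow> 'n) \<Rightarrow> (nat \<Rightarrow> nat \<Rightarrow> nat \<Rightarrow> 'n \<Rightarrow> 'n) \<Rightarrow>
   (nat \<Rightarrow> 'm \<Rightarrow> 'n) \<Rightarrow> bool" where
  "lcm_hom C act cmp C' act' cmp' f \<longleftrightarrow>
     (\<forall>r x. 1 \<le> r \<and> x \<in> C r \<longrightarrow> f r x \<in> C' r) \<and>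
     (\<forall>r \<sigma> x. 1 \<le> r \<and> \<sigma> permutes {..<r} \<and> x \<in> C r \<longrightarrow> f r (act r \<sigma> x) = act' r \<sigma> (f r x)) \<and>
     (\<forall>r i s x. i < r \<and> 2 \<le> r + s \<and> x \<in> C r \<longrightarrow>
         f (r + s - 1) (cmp r i s x) = cmp' r i s (f r x))"

record 'm tmod =
  tsp :: "nat \<Rightarrow> 'm topology"
  tact :: "nat \<Rightarrow> (nat \<Rightarrow> nat) \<Rightarrow> 'm \<Rightarrow> 'm"
  tcomp :: "nat \<Rightarrow> nat \<Rightarrow> nat \<Rightarrow> 'm \<Rightarrow> 'm"

definition top_lmod :: "'m tmod \<Rightarrow> bool" where
  "top_lmod M \<longleftrightarrow> lcm_mod (\<lambda>r. topspace (tsp M r)) (tact M) (tcomp M) \<and>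
     (\<forall>r \<sigma>. 1 \<le> r \<and> \<sigma> permutes {..<r} \<longrightarrow> continuous_map (tsp M r) (tsp M r) (tact M r \<sigma>)) \<and>
     (\<forall>r i s. i < r \<and> 2 \<le> r + s \<longrightarrow> continuous_map (tsp M r) (tsp M (r + s - 1)) (tcomp M r i s))"

definition top_hom :: "'m tmod \<Rightarrow> 'n tmod \<Rightarrow> (nat \<Rightarrow> 'm \<Rightarrow> 'n) \<Rightarrow> bool" where
  "top_hom M N f \<longleftrightarrow>
     lcm_hom (\<lambda>r. topspace (tsp M r)) (tact M) (tcomp M) (\<lambda>r. topspace (tsp N r)) (tact N) (tcomp N) f \<and>
     (\<forall>r. 1 \<le> r \<longrightarrow> continuous_map (tsp M r) (tsp N r) (f r))"

definition FTop :: "'a topology \<Rightarrow> (nat \<Rightarrow> 'a) tmod" where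
  "FTop X = \<lparr> tsp = (\<lambda>r. product_topology (\<lambda>_. X) {..<r}),
              tact = (\<lambda>r \<sigma> x. restrict (x \<circ> \<sigma>) {..<r}),
              tcomp = (\<lambda>r i s x. restrict (x \<circ> delta i s) {..<r + s - 1}) \<rparr>"

record 'a sset =
  scar :: "nat \<Rightarrow> 'a set"
  sface :: "nat \<Rightarrow> nat \<Rightarrow> 'a \<Rightarrow> 'a"   (* sface n i : X_n \<rightarrow> X_(n-1), i \<le> n, n \<ge> 1 *)
  sdeg :: "nat \<Rightarrow> nat \<Rightarrow> 'a \<Rightarrow> 'a"    (* sdeg n i : X_n \<rightarrow> X_(n+1), i \<le> n *)

definition is_sset :: "'a sset \<Rightarrow> bool" where
  "is_sset X \<longleftrightarrow>
     (\<forall>n i x. 1 \<le> n \<and> i \<le> n \<and> x \<in> scar X n \<longrightarrow> sface X n i x \<in> scar X (n - 1)) \<and>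
     (\<forall>n i x. i \<le> n \<and> x \<in> scar X n \<longrightarrow> sdeg X n i x \<in> scar X (Suc n)) \<and>
     (\<forall>n i j x. 2 \<le> n \<and> i < j \<and> j \<le> n \<and> x \<in> scar X n \<longrightarrow>
        sface X (n - 1) i (sface X n j x) = sface X (n - 1) (j - 1) (sface X n i x)) \<and>
     (\<forall>n i j x. i < j \<and> j \<le> n \<and> x \<in> scar X n \<longrightarrow>
        sface X (Suc n) i (sdeg X n j x) = sdeg X (n - 1) (j - 1) (sface X n i x)) \<and>
     (\<forall>n j x. j \<le> n \<and> x \<in> scar X n \<longrightarrow>
        sface X (Suc n) j (sdeg X n j x) = x \<and> sface X (Suc n) (Suc j) (sdeg X n j x) = x) \<and>
     (\<forall>n i j x. Suc j < i \<and> i \<le> Suc n \<and> x \<in> scar X n \<longrightarrow>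
        sface X (Suc n) i (sdeg X n j x) = sdeg X (n - 1) j (sface X n (i - 1) x)) \<and>
     (\<forall>n i j x. i \<le> j \<and> j \<le> n \<and> x \<in> scar X n \<longrightarrow>
        sdeg X (Suc n) i (sdeg X n j x) = sdeg X (Suc n) (Suc j) (sdeg X n i x))"

definition ssmap :: "'a sset \<Rightarrow> 'b sset \<Rightarrow> (nat \<Rightarrow> 'a \<Rightarrow> 'b) \<Rightarrow> bool" where
  "ssmap X Y f \<longleftrightarrow>
     (\<forall>n x. x \<in> scar X n \<longrightarrow> f n x \<in> scar Y n) \<and>
     (\<forall>n i x. 1 \<le> n \<and> i \<le> n \<and> x \<in> scar X n \<longrightarrow> f (n - 1) (sface X n i x) = sface Y n i (f n x)) \<and>
     (\<forall>n i x. i \<le> n \<and> x \<in> scar X n \<longrightarrow> f (Suc n) (sdeg X n i x) = sdeg Y n i (f n x))"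

text \<open>Operations are indexed first by the simplicial level n.\<close>
record 'm smod =
  ssp :: "nat \<Rightarrow> 'm sset"
  sact :: "nat \<Rightarrow> nat \<Rightarrow> (nat \<Rightarrow> nat) \<Rightarrow> 'm \<Rightarrow> 'm"
  scomp :: "nat \<Rightarrow> nat \<Rightarrow> nat \<Rightarrow> nat \<Rightarrow> 'm \<Rightarrow> 'm"

definition sset_lmod :: "'m smod \<Rightarrow> bool" where
  "sset_lmod M \<longleftrightarrow>
     (\<forall>r. 1 \<le> r \<longrightarrow> is_sset (ssp M r)) \<and>
     (\<forall>n. lcm_mod (\<lambda>r. scar (ssp M r) n) (sact M n) (scomp M n)) \<and>
     (\<forall>r \<sigma>. 1 \<le> r \<and> \<sigma> permutes {..<r} \<longrightarrow> ssmap (ssp M r) (ssp M r) (\<lambda>n. sact M n r \<sigma>)) \<and>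
     (\<forall>r i s. i < r \<and> 2 \<le> r + s \<longrightarrow> ssmap (ssp M r) (ssp M (r + s - 1)) (\<lambda>n. scomp M n r i s))"

definition sset_hom :: "'m smod \<Rightarrow> 'n smod \<Rightarrow> (nat \<Rightarrow> nat \<Rightarrow> 'm \<Rightarrow> 'n) \<Rightarrow> bool" where
  "sset_hom M N f \<longleftrightarrow>
     (\<forall>n. lcm_hom (\<lambda>r. scar (ssp M r) n) (sact M n) (scomp M n)
                  (\<lambda>r. scar (ssp N r) n) (sact N n) (scomp N n) (f n)) \<and>
     (\<forall>r. 1 \<le> r \<longrightarrow> ssmap (ssp M r) (ssp N r) (\<lambda>n. f n r))"

definition FSet :: "'a sset \<Rightarrow> (nat \<Rightarrow> 'a) smod" where
  "FSet X = \<lparr> ssp = (\<lambda>r. \<lparr> scar = (\<lambda>n. PiE {..<r} (\<lambda>_. scar X n)),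
                           sface = (\<lambda>n i x. restrict (\<lambda>k. sface X n i (x k)) {..<r}),
                           sdeg = (\<lambda>n i x. restrict (\<lambda>k. sdeg X n i (x k)) {..<r}) \<rparr>),
              sact = (\<lambda>n r \<sigma> x. restrict (x \<circ> \<sigma>) {..<r}),
              scomp = (\<lambda>n r i s x. restrict (x \<circ> delta i s) {..<r + s - 1}) \<rparr>"

end

theory Submission
  imports Defs
begin


lemma delta_lt: "i < r \<Longrightarrow> k < r + s - 1 \<Longrightarrow> delta i s k < r"
  unfolding delta_def by (simp; arith)
lemma delta_6: "j < s \<Longrightarrow> delta i s (delta (i + j) t k) = delta i (s + t - 1) k"
  unfolding delta_def by (simp; arith)
lemma delta_7: "i < k \<Longrightarrow> delta i s (delta (k + s - 1) t m) = delta k t (delta i s m)"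
  unfolding delta_def by (simp; arith)
lemma delta_1: "delta i 1 k = k" by (simp add: delta_def)
lemma delta_Suc0: "delta i (Suc 0) k = k" by (simp add: delta_def)

lemma perm_lt: "\<sigma> permutes {..<r} \<Longrightarrow> k < r \<Longrightarrow> \<sigma> k < r"
  using permutes_in_image[of \<sigma> "{..<r}" k] by simp

lemma blk_key:
  assumes p: "\<sigma> permutes {..<r}" and ir: "i < r" and k: "k < r + s - 1"
  shows "blkperm r \<sigma> i s k < r + s - 1 \<and> delta (\<sigma> i) s (blkperm r \<sigma> i s k) = \<sigma> (delta i s k)"
proof -
  have dl: "delta i s k < r" using delta_lt ir k by blast
  have sl: "\<sigma> (delta i s k) < r" "\<sigma> i < r" using dl ir p by (auto simp: perm_lt)
  have inj: "\<sigma> (delta i s k) = \<sigma> i \<longleftrightarrow> delta i s k = i"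
    using p by (metis permutes_inj injD)
  have bl: "delta i s k = i \<longleftrightarrow> i \<le> k \<and> k < i + s" unfolding delta_def by (simp; arith)
  define m where "m = \<sigma> (delta i s k)"
  have b: "blkperm r \<sigma> i s k = (if m \<le> \<sigma> i then m else m + s - 1) + (if i \<le> k \<and> k < i + s then k - i else 0)"
    using k unfolding blkperm_def Let_def m_def by simp
  show ?thesis
  proof (cases "i \<le> k \<and> k < i + s")
    case True
    then have m: "m = \<sigma> i" using bl inj m_def by simp
    have b2: "blkperm r \<sigma> i s k = \<sigma> i + (k - i)" using b m True by simp
    have "k - i < s" using True by arith
    then have "delta (\<sigma> i) s (\<sigma> i + (k - i)) = \<sigma> i" unfolding delta_def by simp
    then show ?thesis using b2 True sl(2) \<open>k - i < s\<close> m m_def by simp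
  next
    case False
    then have mne: "m \<noteq> \<sigma> i" using bl inj m_def by simp
    show ?thesis
    proof (cases "m < \<sigma> i")
      case True
      then have "blkperm r \<sigma> i s k = m" using b False by simp
      moreover have "delta (\<sigma> i) s m = m" using True unfolding delta_def by simp
      ultimately show ?thesis using True sl(2) m_def by simp
    next
      case c2: False
      then have "blkperm r \<sigma> i s k = m + s - 1" using b False mne by simp
      moreover have "delta (\<sigma> i) s (m + s - 1) = m" using c2 mne unfolding delta_def by simp
      ultimately show ?thesis using sl(1) m_def c2 mne by simp
    qed
  qed
qed
lemma PiE_lcm_mod:
  "lcm_mod (\<lambda>r. PiE {..<r} (\<lambda>_. A)) (\<lambda>r \<sigma> x. restrict (x \<circ> \<sigma>) {..<r})
      (\<lambda>r i s x. restrict (x \<circ> delta i s) {..<r + s - 1})"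
  unfolding lcm_mod_def
proof (intro conjI allI impI; (elim conjE)?)
  fix r :: nat and \<sigma> and x :: "nat \<Rightarrow> 'a" assume "\<sigma> permutes {..<r}" "x \<in> PiE {..<r} (\<lambda>_. A)"
  then show "restrict (x \<circ> \<sigma>) {..<r} \<in> PiE {..<r} (\<lambda>_. A)"
    unfolding PiE_iff using perm_lt by fastforce
next
  fix r i s :: nat and x :: "nat \<Rightarrow> 'a" assume "i < r" "x \<in> PiE {..<r} (\<lambda>_. A)"
  then show "restrict (x \<circ> delta i s) {..<r + s - 1} \<in> PiE {..<r + s - 1} (\<lambda>_. A)"
    using delta_lt by auto
next
  fix r :: nat and x :: "nat \<Rightarrow> 'a" assume "x \<in> PiE {..<r} (\<lambda>_. A)"
  then show "restrict (x \<circ> id) {..<r} = x" by (auto simp: PiE_def extensional_def)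
next
  fix r :: nat and \<sigma> \<tau> and x :: "nat \<Rightarrow> 'a" assume "\<sigma> permutes {..<r}"
  then show "restrict (restrict (x \<circ> \<tau>) {..<r} \<circ> \<sigma>) {..<r} = restrict (x \<circ> (\<tau> \<circ> \<sigma>)) {..<r}"
    using perm_lt[OF \<open>\<sigma> permutes {..<r}\<close>] by (intro ext) simp
next
  fix r i :: nat and x :: "nat \<Rightarrow> 'a" assume "x \<in> PiE {..<r} (\<lambda>_. A)"
  then show "restrict (x \<circ> delta i 1) {..<r + 1 - 1} = x" by (simp add: delta_Suc0 PiE_def extensional_def fun_eq_iff)
next
  fix r i s j t :: nat and x :: "nat \<Rightarrow> 'a" assume "i < r" "j < s"
  then have ijl: "i + j < r + s - 1" by simp
  have eqb: "r + (s + t - 1) - 1 = r + s - 1 + t - 1" using \<open>j<s\<close> by arith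
  then show "restrict (restrict (x \<circ> delta i s) {..<r + s - 1} \<circ> delta (i + j) t) {..<r + s - 1 + t - 1} =
           restrict (x \<circ> delta i (s + t - 1)) {..<r + (s + t - 1) - 1}"
    using delta_6[OF \<open>j<s\<close>, of i t] delta_lt[OF ijl, of _ t] \<open>j<s\<close>
    unfolding eqb by (intro ext) simp
next
  fix r i k s t :: nat and x :: "nat \<Rightarrow> 'a" assume "i < k" "k < r"
  then have a: "k + s - 1 < r + s - 1" "i < r + t - 1" by auto
  have eqb: "r + t - 1 + s - 1 = r + s - 1 + t - 1" using \<open>i<k\<close> \<open>k<r\<close> by arith
  show "restrict (restrict (x \<circ> delta i s) {..<r + s - 1} \<circ> delta (k + s - 1) t) {..<r + s - 1 + t - 1} =
           restrict (restrict (x \<circ> delta k t) {..<r + t - 1} \<circ> delta i s) {..<r + t - 1 + s - 1}"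
    using delta_lt[OF a(1), of _ t] delta_lt[OF a(2), of _ s] delta_7[OF \<open>i<k\<close>, of s t]
    unfolding eqb by (intro ext) simp
next
  fix r i s :: nat and \<sigma> and x :: "nat \<Rightarrow> 'a" assume p: "\<sigma> permutes {..<r}" and "i < r"
  show "restrict (restrict (x \<circ> \<sigma>) {..<r} \<circ> delta i s) {..<r + s - 1} =
           restrict (restrict (x \<circ> delta (\<sigma> i) s) {..<r + s - 1} \<circ> blkperm r \<sigma> i s) {..<r + s - 1}"
    using blk_key[OF p \<open>i<r\<close>] delta_lt[OF \<open>i<r\<close>] by (intro ext) auto
next
  fix r i s :: nat and \<tau> and x :: "nat \<Rightarrow> 'a" assume "i < r" "1 \<le> s" "\<tau> permutes {..<s}"
  then have "\<tau> (k - i) < s" if "i \<le> k" "k < i + s" for k using that by (auto simp: perm_lt)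
  then have "delta i s (idblk i \<tau> s k) = delta i s k" for k
    unfolding idblk_def delta_def by (simp; fastforce)
  moreover have "idblk i \<tau> s k < r + s - 1" if kl: "k < r + s - 1" for k
  proof (cases "i \<le> k \<and> k < i + s")
    case True
    then have "\<tau> (k - i) < s" using \<open>\<And>k. i \<le> k \<Longrightarrow> k < i + s \<Longrightarrow> \<tau> (k - i) < s\<close> by blast
    then show ?thesis using True \<open>i<r\<close> unfolding idblk_def by simp
  next
    case False
    then show ?thesis using kl unfolding idblk_def by auto
  qed
  ultimately show "restrict (restrict (x \<circ> delta i s) {..<r + s - 1} \<circ> idblk i \<tau> s) {..<r + s - 1} =
           restrict (x \<circ> delta i s) {..<r + s - 1}"
    by (intro ext) auto
qed




definition red :: "nat \<Rightarrow> nat \<Rightarrow> nat" where "red j k = (if k < j then k else k - 1)"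
definition jz :: "nat \<Rightarrow> nat" where "jz k = (if k = 0 then 1 else 0)"

fun proj :: "(nat \<Rightarrow> nat \<Rightarrow> nat \<Rightarrow> 'm \<Rightarrow> 'm) \<Rightarrow> nat \<Rightarrow> nat \<Rightarrow> 'm \<Rightarrow> 'm" where
  "proj c r k m = (if r \<le> 1 then m else proj c (r - 1) (red (jz k) k) (c r (jz k) 0 m))"

declare proj.simps[simp del]

lemma proj_1: "proj c (Suc 0) k m = m" by (simp add: proj.simps)
lemma proj_step: "2 \<le> r \<Longrightarrow> proj c r k m = proj c (r - 1) (red (jz k) k) (c r (jz k) 0 m)"
  by (simp add: proj.simps)

lemma jz_ne: "jz k \<noteq> k" by (simp add: jz_def)
lemma jz_lt: "k < r \<Longrightarrow> 2 \<le> r \<Longrightarrow> jz k < r" by (simp add: jz_def)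
lemma red_lt: "k < r \<Longrightarrow> j < r \<Longrightarrow> j \<noteq> k \<Longrightarrow> red j k < r - 1" unfolding red_def by auto
lemma red_inj: "j \<noteq> a \<Longrightarrow> j \<noteq> b \<Longrightarrow> red j a = red j b \<longleftrightarrow> a = b" unfolding red_def by auto
lemma red_delta: "red j (delta j 0 k) = k" unfolding red_def delta_def by simp
lemma delta_red: "j \<noteq> k \<Longrightarrow> delta j 0 (red j k) = k" unfolding red_def delta_def by (simp; arith)

lemma perm1: "\<sigma> permutes {..<Suc 0} \<Longrightarrow> \<sigma> = id"
proof
  fix x assume p: "\<sigma> permutes {..<Suc 0}"
  show "\<sigma> x = id x"
  proof (cases "x = 0")
    case True then show ?thesis using perm_lt[OF p, of 0] by simp
  next
    case False then show ?thesis using permutes_not_in[OF p] by simp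
  qed
qed

lemma delta0_ne: "delta i 0 k \<noteq> i" unfolding delta_def by simp

lemma blk0_val:
  assumes p: "\<sigma> permutes {..<r}" and j: "j < r" and k: "k < r" and jk: "j \<noteq> k"
  shows "blkperm r \<sigma> j 0 (red j k) = red (\<sigma> j) (\<sigma> k)"
proof -
  have "red j k < r + 0 - 1" using red_lt[OF k j jk] by simp
  from blk_key[OF p j this] have "delta (\<sigma> j) 0 (blkperm r \<sigma> j 0 (red j k)) = \<sigma> k"
    using delta_red[OF jk] by simp
  then show ?thesis using red_delta by metis
qed

lemma blk0_perm:
  assumes p: "\<sigma> permutes {..<r}" and j: "j < r"
  shows "blkperm r \<sigma> j 0 permutes {..<r - 1}"
proof (rule bij_imp_permutes)
  let ?b = "blkperm r \<sigma> j 0"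
  have key: "?b a < r - 1 \<and> delta (\<sigma> j) 0 (?b a) = \<sigma> (delta j 0 a)" if "a < r - 1" for a
    using blk_key[OF p j, of a 0] that by simp
  have sub: "?b ` {..<r - 1} \<subseteq> {..<r - 1}" using key by auto
  have inj: "inj_on ?b {..<r - 1}"
  proof (rule inj_onI)
    fix a b assume a: "a \<in> {..<r - 1}" and b: "b \<in> {..<r - 1}" and e: "?b a = ?b b"
    then have "\<sigma> (delta j 0 a) = \<sigma> (delta j 0 b)" using key[of a] key[of b] by auto
    then have "delta j 0 a = delta j 0 b" using permutes_inj[OF p] by (metis injD)
    then show "a = b" using red_delta by metis
  qed
  show "bij_betw ?b {..<r - 1} {..<r - 1}"
    unfolding bij_betw_def using inj endo_inj_surj[OF _ sub inj] by simp
  show "?b x = x" if "x \<notin> {..<r - 1}" for x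
    using that unfolding blkperm_def by simp
qed

lemma proj_nat:
  assumes h: "\<And>r j m. 2 \<le> r \<Longrightarrow> j < r \<Longrightarrow> m \<in> C r \<Longrightarrow> h (r - 1) (c r j 0 m) = c' r j 0 (h r m)"
    and cin: "\<And>r j m. 2 \<le> r \<Longrightarrow> j < r \<Longrightarrow> m \<in> C r \<Longrightarrow> c r j 0 m \<in> C (r - 1)"
  shows "1 \<le> r \<Longrightarrow> k < r \<Longrightarrow> m \<in> C r \<Longrightarrow> h 1 (proj c r k m) = proj c' r k (h r m)"
proof (induction r arbitrary: k m rule: less_induct)
  case (less r)
  show ?case
  proof (cases "r = 1")
    case True then show ?thesis by (simp add: proj_1)
  next
    case False
    then have r2: "2 \<le> r" using less by simp
    have j: "jz k < r" using jz_lt r2 less by blast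
    have "red (jz k) k < r - 1" using red_lt less jz_ne j by metis
    moreover have "c r (jz k) 0 m \<in> C (r - 1)" using cin r2 j less by blast
    moreover have "r - 1 < r" "1 \<le> r - 1" using r2 by auto
    ultimately have "h 1 (proj c (r - 1) (red (jz k) k) (c r (jz k) 0 m)) =
        proj c' (r - 1) (red (jz k) k) (h (r - 1) (c r (jz k) 0 m))" using less.IH by metis
    moreover have "proj c r k m = proj c (r - 1) (red (jz k) k) (c r (jz k) 0 m)" by (rule proj_step[OF r2])
    moreover have "proj c' r k (h r m) = proj c' (r - 1) (red (jz k) k) (c' r (jz k) 0 (h r m))" by (rule proj_step[OF r2])
    ultimately show ?thesis using h[OF r2 j less(4)] by simp
  qed
qed

context
  fixes C :: "nat \<Rightarrow> 'm set" and act cmp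
  assumes M: "lcm_mod C act cmp"
begin

lemma cmp_in: "i < r \<Longrightarrow> 2 \<le> r + s \<Longrightarrow> x \<in> C r \<Longrightarrow> cmp r i s x \<in> C (r + s - 1)"
  using M[unfolded lcm_mod_def, THEN conjunct2, THEN conjunct1] by blast
lemma act_in: "1 \<le> r \<Longrightarrow> \<sigma> permutes {..<r} \<Longrightarrow> x \<in> C r \<Longrightarrow> act r \<sigma> x \<in> C r"
  using M[unfolded lcm_mod_def, THEN conjunct1] by blast
lemma act_id: "1 \<le> r \<Longrightarrow> x \<in> C r \<Longrightarrow> act r id x = x"
  using M[unfolded lcm_mod_def, THEN conjunct2, THEN conjunct2, THEN conjunct1] by blast
lemma cmp_1: "i < r \<Longrightarrow> x \<in> C r \<Longrightarrow> cmp r i 1 x = x"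
  using M[unfolded lcm_mod_def, THEN conjunct2, THEN conjunct2, THEN conjunct2, THEN conjunct2, THEN conjunct1] by blast
lemma ax6: "i < r \<Longrightarrow> j < s \<Longrightarrow> 3 \<le> r + s + t \<Longrightarrow> x \<in> C r \<Longrightarrow>
         cmp (r + s - 1) (i + j) t (cmp r i s x) = cmp r i (s + t - 1) x"
  using M[unfolded lcm_mod_def, THEN conjunct2, THEN conjunct2, THEN conjunct2, THEN conjunct2, THEN conjunct2, THEN conjunct1] by blast
lemma ax7: "i < k \<Longrightarrow> k < r \<Longrightarrow> 2 \<le> r + s \<Longrightarrow> 2 \<le> r + t \<Longrightarrow> 3 \<le> r + s + t \<Longrightarrow> x \<in> C r \<Longrightarrow>
         cmp (r + s - 1) (k + s - 1) t (cmp r i s x) = cmp (r + t - 1) i s (cmp r k t x)"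
  using M[unfolded lcm_mod_def, THEN conjunct2, THEN conjunct2, THEN conjunct2, THEN conjunct2, THEN conjunct2, THEN conjunct2, THEN conjunct1] by blast
lemma ax8: "\<sigma> permutes {..<r} \<Longrightarrow> i < r \<Longrightarrow> 2 \<le> r + s \<Longrightarrow> x \<in> C r \<Longrightarrow>
         cmp r i s (act r \<sigma> x) = act (r + s - 1) (blkperm r \<sigma> i s) (cmp r (\<sigma> i) s x)"
  using M[unfolded lcm_mod_def, THEN conjunct2, THEN conjunct2, THEN conjunct2, THEN conjunct2, THEN conjunct2, THEN conjunct2, THEN conjunct2, THEN conjunct1] by blast

lemma cmp0_in: "i < r \<Longrightarrow> 2 \<le> r \<Longrightarrow> x \<in> C r \<Longrightarrow> cmp r i 0 x \<in> C (r - 1)"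
  using cmp_in[of i r 0 x] by simp

lemma proj_in: "1 \<le> r \<Longrightarrow> k < r \<Longrightarrow> m \<in> C r \<Longrightarrow> proj cmp r k m \<in> C 1"
proof (induction r arbitrary: k m rule: less_induct)
  case (less r)
  show ?case
  proof (cases "r = 1")
    case True then show ?thesis using less by (simp add: proj_1)
  next
    case False
    then have r2: "2 \<le> r" using less by simp
    have "cmp r (jz k) 0 m \<in> C (r - 1)" using cmp0_in jz_lt r2 less by blast
    moreover have "red (jz k) k < r - 1" using red_lt less jz_ne jz_lt r2 by metis
    moreover have "proj cmp r k m = proj cmp (r - 1) (red (jz k) k) (cmp r (jz k) 0 m)"
      by (rule proj_step[OF r2])
    moreover have "r - 1 < r" "1 \<le> r - 1" using r2 by auto
    ultimately show ?thesis using less.IH by metis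
  qed
qed

lemma proj_any: "2 \<le> r \<Longrightarrow> k < r \<Longrightarrow> j < r \<Longrightarrow> j \<noteq> k \<Longrightarrow> m \<in> C r \<Longrightarrow>
   proj cmp r k m = proj cmp (r - 1) (red j k) (cmp r j 0 m)"
proof (induction r arbitrary: k j m rule: less_induct)
  case (less r)
  define j0 where "j0 = jz k"
  have j0: "j0 < r" "j0 \<noteq> k" using jz_lt jz_ne less j0_def by auto
  have st: "proj cmp r k m = proj cmp (r - 1) (red j0 k) (cmp r j0 0 m)"
    using proj_step[OF less(2)] j0_def by simp
  show ?case
  proof (cases "j = j0")
    case True then show ?thesis using st by simp
  next
    case False
    then have r3: "3 \<le> r" using less j0 by arith
    define m0 where "m0 = cmp r j0 0 m"
    define m1 where "m1 = cmp r j 0 m"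
    have m0: "m0 \<in> C (r - 1)" using cmp0_in j0 less r3 m0_def by simp
    have m1: "m1 \<in> C (r - 1)" using cmp0_in less r3 m1_def by simp
    have a1: "red j0 k < r - 1" "red j0 j < r - 1" "red j0 j \<noteq> red j0 k"
      using red_lt[of _ r] red_inj j0 less False by auto
    have a2: "red j k < r - 1" "red j j0 < r - 1" "red j j0 \<noteq> red j k"
      using red_lt[of _ r] red_inj j0 less False by auto
    have r1: "r - 1 < r" "2 \<le> r - 1" using r3 by auto
    have e1: "proj cmp (r - 1) (red j0 k) m0 =
        proj cmp (r - 1 - 1) (red (red j0 j) (red j0 k)) (cmp (r - 1) (red j0 j) 0 m0)"
      using less.IH[OF r1 a1(1) a1(2) a1(3) m0] .
    have e2: "proj cmp (r - 1) (red j k) m1 =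
        proj cmp (r - 1 - 1) (red (red j j0) (red j k)) (cmp (r - 1) (red j j0) 0 m1)"
      using less.IH[OF r1 a2(1) a2(2) a2(3) m1] .
    have e3: "cmp (r - 1) (red j0 j) 0 m0 = cmp (r - 1) (red j j0) 0 m1"
    proof (cases "j0 < j")
      case True
      then show ?thesis using ax7[of j0 j r 0 0 m] less.prems r3 j0 unfolding m0_def m1_def red_def by simp
    next
      case c: False
      then have "j < j0" using False by simp
      then show ?thesis using ax7[of j j0 r 0 0 m] less.prems r3 j0 unfolding m0_def m1_def red_def by simp
    qed
    have e4: "red (red j0 j) (red j0 k) = red (red j j0) (red j k)"
      using False j0 less unfolding red_def by auto
    show ?thesis using st e1 e2 e3 e4 m0_def m1_def by simp
  qed
qed


lemma proj_cmp: "i < r \<Longrightarrow> 2 \<le> r + s \<Longrightarrow> m \<in> C r \<Longrightarrow> k < r + s - 1 \<Longrightarrow>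
   proj cmp (r + s - 1) k (cmp r i s m) = proj cmp r (delta i s k) m"
proof (induction s arbitrary: k rule: less_induct)
  case (less s)
  consider "s = 0" | "s = 1" | "2 \<le> s" by arith
  then show ?case
  proof cases
    case 1
    then have r2: "2 \<le> r" using less by simp
    have "delta i 0 k < r" using delta_lt[of i r k 0] less 1 by simp
    then have "proj cmp r (delta i 0 k) m = proj cmp (r - 1) (red i (delta i 0 k)) (cmp r i 0 m)"
      using proj_any[OF r2 _ less.prems(1) not_sym[OF delta0_ne] less.prems(3)] by simp
    then show ?thesis using 1 red_delta by simp
  next
    case 2
    then show ?thesis using cmp_1[OF less(2) less(4)] by (simp add: delta_Suc0)
  next
    case 3
    define j where "j = (if k = i then i + 1 else i)"
    define n where "n = r + s - 1"
    have jf: "j < n" "j \<noteq> k" "i \<le> j" "j < i + s" "2 \<le> n" using 3 less(2) unfolding j_def n_def by auto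
    have x: "cmp r i s m \<in> C n" using cmp_in less 3 n_def by simp
    have kn: "k < n" using less n_def by simp
    have e1: "proj cmp n k (cmp r i s m) = proj cmp (n - 1) (red j k) (cmp n j 0 (cmp r i s m))"
      using proj_any[OF jf(5) kn jf(1) jf(2) x] by simp
    have "cmp (r + s - 1) (i + (j - i)) 0 (cmp r i s m) = cmp r i (s + 0 - 1) m"
      using ax6[of i r "j - i" s 0 m] less 3 jf by simp
    then have e2: "cmp n j 0 (cmp r i s m) = cmp r i (s - 1) m" using jf n_def by simp
    have rl: "red j k < r + (s - 1) - 1" using red_lt[OF kn jf(1) jf(2)] n_def 3 by simp
    have e3: "proj cmp (r + (s - 1) - 1) (red j k) (cmp r i (s - 1) m) = proj cmp r (delta i (s - 1) (red j k)) m"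
      using less.IH[of "s - 1" "red j k"] 3 less.prems rl by simp
    have e4: "delta i (s - 1) (red j k) = delta i s k"
      using jf 3 unfolding j_def red_def delta_def by (simp; arith)
    have "n - 1 = r + (s - 1) - 1" using n_def 3 by simp
    then show ?thesis using e1 e2 e3 e4 n_def by simp
  qed
qed

lemma proj_act: "1 \<le> r \<Longrightarrow> \<sigma> permutes {..<r} \<Longrightarrow> k < r \<Longrightarrow> m \<in> C r \<Longrightarrow>
   proj cmp r k (act r \<sigma> m) = proj cmp r (\<sigma> k) m"
proof (induction r arbitrary: \<sigma> k m rule: less_induct)
  case (less r)
  show ?case
  proof (cases "r = 1")
    case True
    then have si: "\<sigma> = id" using perm1 less by simp
    have am: "act r \<sigma> m = m" using act_id[of r m] si less.prems by simp
    have "\<sigma> k = k" using si by simp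
    then show ?thesis by (simp only: am)
  next
    case False
    then have r2: "2 \<le> r" using less by simp
    define j where "j = jz k"
    define b where "b = blkperm r \<sigma> j 0"
    have j: "j < r" "j \<noteq> k" using jz_lt jz_ne r2 less j_def by auto
    have sj: "\<sigma> j < r" "\<sigma> k < r" "\<sigma> j \<noteq> \<sigma> k"
      using perm_lt[OF less(3)] j less permutes_inj[OF less(3)] by (auto dest: injD)
    have am: "act r \<sigma> m \<in> C r" using act_in less by simp
    have e1: "proj cmp r k (act r \<sigma> m) = proj cmp (r - 1) (red j k) (cmp r j 0 (act r \<sigma> m))"
      using proj_any[OF r2 less(4) j(1) j(2) am] .
    have e2: "cmp r j 0 (act r \<sigma> m) = act (r - 1) b (cmp r (\<sigma> j) 0 m)"
      using ax8[OF less(3) j(1), of 0 m] r2 less b_def by simp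
    have bp: "b permutes {..<r - 1}" using blk0_perm[OF less(3) j(1)] b_def by simp
    have c: "cmp r (\<sigma> j) 0 m \<in> C (r - 1)" using cmp0_in sj r2 less by simp
    have rl: "red j k < r - 1" using red_lt less j by metis
    have e3: "proj cmp (r - 1) (red j k) (act (r - 1) b (cmp r (\<sigma> j) 0 m)) =
       proj cmp (r - 1) (b (red j k)) (cmp r (\<sigma> j) 0 m)"
      using less.IH[of "r - 1" b "red j k"] r2 bp rl c by simp
    have e4: "b (red j k) = red (\<sigma> j) (\<sigma> k)" using blk0_val[OF less(3) j(1) less(4) j(2)] b_def by simp
    have e5: "proj cmp r (\<sigma> k) m = proj cmp (r - 1) (red (\<sigma> j) (\<sigma> k)) (cmp r (\<sigma> j) 0 m)"
      using proj_any[OF r2 sj(2) sj(1) sj(3) less(5)] .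
    show ?thesis using e1 e2 e3 e4 e5 by simp
  qed
qed

lemma phi_hom:
  assumes g: "\<And>m. m \<in> C 1 \<Longrightarrow> g m \<in> A"
  shows "lcm_hom C act cmp (\<lambda>r. PiE {..<r} (\<lambda>_. A)) (\<lambda>r \<sigma> x. restrict (x \<circ> \<sigma>) {..<r})
      (\<lambda>r i s x. restrict (x \<circ> delta i s) {..<r + s - 1}) (\<lambda>r m. restrict (\<lambda>k. g (proj cmp r k m)) {..<r})"
  unfolding lcm_hom_def
proof (intro conjI allI impI; (elim conjE)?)
  fix r :: nat and m assume "1 \<le> r" "m \<in> C r"
  then show "restrict (\<lambda>k. g (proj cmp r k m)) {..<r} \<in> PiE {..<r} (\<lambda>_. A)"
    using proj_in g by auto
next
  fix r :: nat and \<sigma> m assume a: "1 \<le> r" "\<sigma> permutes {..<r}" "m \<in> C r"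
  show "restrict (\<lambda>k. g (proj cmp r k (act r \<sigma> m))) {..<r} =
           restrict (restrict (\<lambda>k. g (proj cmp r k m)) {..<r} \<circ> \<sigma>) {..<r}"
    using proj_act[OF a(1) a(2) _ a(3)] perm_lt[OF a(2)] by (intro ext) simp
next
  fix r i s :: nat and m assume a: "i < r" "2 \<le> r + s" "m \<in> C r"
  show "restrict (\<lambda>k. g (proj cmp (r + s - 1) k (cmp r i s m))) {..<r + s - 1} =
           restrict (restrict (\<lambda>k. g (proj cmp r k m)) {..<r} \<circ> delta i s) {..<r + s - 1}"
    using proj_cmp[OF a] delta_lt[OF a(1)] by (intro ext) simp
qed

lemma hom_unique:
  assumes h: "lcm_hom C act cmp (\<lambda>r. PiE {..<r} (\<lambda>_. A)) (\<lambda>r \<sigma> x. restrict (x \<circ> \<sigma>) {..<r})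
      (\<lambda>r i s x. restrict (x \<circ> delta i s) {..<r + s - 1}) \<psi>"
  shows "1 \<le> r \<Longrightarrow> m \<in> C r \<Longrightarrow> k < r \<Longrightarrow> \<psi> r m k = \<psi> 1 (proj cmp r k m) 0"
proof (induction r arbitrary: k m rule: less_induct)
  case (less r)
  show ?case
  proof (cases "r = 1")
    case True then show ?thesis using less by (simp add: proj_1)
  next
    case False
    then have r2: "2 \<le> r" using less by simp
    define j where "j = jz k"
    have j: "j < r" "j \<noteq> k" using jz_lt jz_ne r2 less j_def by auto
    have hc: "\<psi> (r + 0 - 1) (cmp r j 0 m) = restrict (\<psi> r m \<circ> delta j 0) {..<r + 0 - 1}"
      using h[unfolded lcm_hom_def, THEN conjunct2, THEN conjunct2, rule_format, of j r 0 m] j r2 less.prems by simp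
    have rl: "red j k < r - 1" using red_lt less j by metis
    have "\<psi> (r - 1) (cmp r j 0 m) (red j k) = \<psi> r m k"
      using hc rl delta_red[OF j(2)] by simp
    moreover have "\<psi> (r - 1) (cmp r j 0 m) (red j k) = \<psi> 1 (proj cmp (r - 1) (red j k) (cmp r j 0 m)) 0"
      using less.IH[of "r - 1"] r2 rl cmp0_in[OF j(1) r2 less(3)] by simp
    moreover have "proj cmp r k m = proj cmp (r - 1) (red (jz k) k) (cmp r (jz k) 0 m)" by (rule proj_step[OF r2])
    ultimately show ?thesis using j_def by simp
  qed
qed

lemma hom_unique2:
  assumes h: "lcm_hom C act cmp (\<lambda>r. PiE {..<r} (\<lambda>_. A)) (\<lambda>r \<sigma> x. restrict (x \<circ> \<sigma>) {..<r})
      (\<lambda>r i s x. restrict (x \<circ> delta i s) {..<r + s - 1}) \<psi>"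
    and g: "\<And>m. m \<in> C 1 \<Longrightarrow> \<psi> 1 m 0 = g m"
    and r: "1 \<le> r" and m: "m \<in> C r"
  shows "\<psi> r m = restrict (\<lambda>k. g (proj cmp r k m)) {..<r}"
proof
  fix k
  have "\<psi> r m \<in> PiE {..<r} (\<lambda>_. A)" using h[unfolded lcm_hom_def] r m by blast
  then show "\<psi> r m k = restrict (\<lambda>k. g (proj cmp r k m)) {..<r} k"
    using hom_unique[OF h r m, of k] g proj_in[OF r _ m] by (cases "k < r") (auto simp: PiE_def extensional_def)
qed

end



lemma top_lcm: "top_lmod M \<Longrightarrow> lcm_mod (\<lambda>r. topspace (tsp M r)) (tact M) (tcomp M)"
  unfolding top_lmod_def by blast

lemma tcomp_cont: "top_lmod M \<Longrightarrow> i < r \<Longrightarrow> 2 \<le> r + s \<Longrightarrow> continuous_map (tsp M r) (tsp M (r + s - 1)) (tcomp M r i s)"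
  unfolding top_lmod_def by blast

lemma proj_cont:
  assumes M: "top_lmod M"
  shows "1 \<le> r \<Longrightarrow> k < r \<Longrightarrow> continuous_map (tsp M r) (tsp M 1) (proj (tcomp M) r k)"
proof (induction r arbitrary: k rule: less_induct)
  case (less r)
  show ?case
  proof (cases "r = 1")
    case True
    have "proj (tcomp M) r k = id" using True by (simp add: proj_1 fun_eq_iff)
    then show ?thesis using True by simp
  next
    case False
    then have r2: "2 \<le> r" using less by simp
    have j: "jz k < r" using jz_lt r2 less by blast
    have rl: "red (jz k) k < r - 1" using red_lt less jz_ne j by metis
    have c1: "continuous_map (tsp M r) (tsp M (r - 1)) (tcomp M r (jz k) 0)"
      using tcomp_cont[OF M j, of 0] r2 by simp
    have c2: "continuous_map (tsp M (r - 1)) (tsp M 1) (proj (tcomp M) (r - 1) (red (jz k) k))"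
      using less.IH[of "r - 1"] r2 rl by simp
    have eq: "proj (tcomp M) r k = proj (tcomp M) (r - 1) (red (jz k) k) \<circ> tcomp M r (jz k) 0"
      by (intro ext) (simp only: o_apply proj_step[OF r2])
    show ?thesis unfolding eq by (rule continuous_map_compose[OF c1 c2])
  qed
qed

lemma restrict_cont:
  assumes "\<And>k. k < r \<Longrightarrow> f k < q"
  shows "continuous_map (product_topology (\<lambda>_. X) {..<q}) (product_topology (\<lambda>_. X) {..<r}) (\<lambda>x. restrict (x \<circ> f) {..<r})"
  unfolding continuous_map_componentwise
proof (intro conjI ballI)
  show "(\<lambda>x. restrict (x \<circ> f) {..<r}) ` topspace (product_topology (\<lambda>_. X) {..<q}) \<subseteq> extensional {..<r}"
    by auto
next
  fix k assume "k \<in> {..<r}"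
  then have "f k \<in> {..<q}" using assms by simp
  then have "continuous_map (product_topology (\<lambda>_. X) {..<q}) X (\<lambda>x. x (f k))"
    by (rule continuous_map_product_projection)
  then show "continuous_map (product_topology (\<lambda>_. X) {..<q}) X (\<lambda>x. restrict (x \<circ> f) {..<r} k)"
    using \<open>k \<in> {..<r}\<close> by simp
qed

lemma FTop_mod: "top_lmod (FTop X)"
  unfolding top_lmod_def
proof (intro conjI allI impI; (elim conjE)?)
  show "lcm_mod (\<lambda>r. topspace (tsp (FTop X) r)) (tact (FTop X)) (tcomp (FTop X))"
    unfolding FTop_def using PiE_lcm_mod[of "topspace X"] by simp
next
  fix r :: nat and \<sigma> assume "1 \<le> r" and p: "\<sigma> permutes {..<r}"
  then show "continuous_map (tsp (FTop X) r) (tsp (FTop X) r) (tact (FTop X) r \<sigma>)"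
    unfolding FTop_def using restrict_cont[of r \<sigma> r X] perm_lt[OF p] by simp
next
  fix r i s :: nat assume "i < r" "2 \<le> r + s"
  then show "continuous_map (tsp (FTop X) r) (tsp (FTop X) (r + s - 1)) (tcomp (FTop X) r i s)"
    unfolding FTop_def using restrict_cont[of "r + s - 1" "delta i s" r X] delta_lt by simp
qed

lemma top_part:
  fixes M :: "'m tmod" and X :: "'a topology"
  assumes M: "top_lmod M" and g: "continuous_map (tsp M 1) X g"
  shows "\<exists>\<phi>. top_hom M (FTop X) \<phi> \<and>
                      (\<forall>m \<in> topspace (tsp M 1). \<phi> 1 m 0 = g m) \<and>
                      (\<forall>\<psi>. top_hom M (FTop X) \<psi> \<and> (\<forall>m \<in> topspace (tsp M 1). \<psi> 1 m 0 = g m) \<longrightarrow>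
                           (\<forall>r m. 1 \<le> r \<and> m \<in> topspace (tsp M r) \<longrightarrow> \<psi> r m = \<phi> r m))"
proof -
  define \<phi> where "\<phi> = (\<lambda>r m. restrict (\<lambda>k. g (proj (tcomp M) r k m)) {..<r})"
  have L: "lcm_mod (\<lambda>r. topspace (tsp M r)) (tact M) (tcomp M)" using top_lcm[OF M] .
  have gA: "\<And>m. m \<in> topspace (tsp M 1) \<Longrightarrow> g m \<in> topspace X"
    using g by (simp add: continuous_map_def Pi_iff)
  have H: "lcm_hom (\<lambda>r. topspace (tsp M r)) (tact M) (tcomp M)
     (\<lambda>r. topspace (tsp (FTop X) r)) (tact (FTop X)) (tcomp (FTop X)) \<phi>"
    using phi_hom[OF L gA] unfolding \<phi>_def FTop_def by simp
  have Cc: "continuous_map (tsp M r) (tsp (FTop X) r) (\<phi> r)" if r: "1 \<le> r" for r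
    unfolding FTop_def \<phi>_def
    apply simp
    unfolding continuous_map_componentwise
  proof (intro conjI ballI)
    show "(\<lambda>m. restrict (\<lambda>k. g (proj (tcomp M) r k m)) {..<r}) ` topspace (tsp M r) \<subseteq> extensional {..<r}"
      by auto
  next
    fix k assume "k \<in> {..<r}"
    then have "continuous_map (tsp M r) X (g \<circ> proj (tcomp M) r k)"
      using continuous_map_compose[OF proj_cont[OF M r] g] by simp
    then show "continuous_map (tsp M r) X (\<lambda>m. restrict (\<lambda>k. g (proj (tcomp M) r k m)) {..<r} k)"
      using \<open>k \<in> {..<r}\<close> by (simp add: o_def)
  qed
  have T: "top_hom M (FTop X) \<phi>" unfolding top_hom_def using H Cc by blast
  have U: "\<phi> 1 m 0 = g m" for m unfolding \<phi>_def by (simp add: proj_1)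
  show ?thesis
  proof (intro exI conjI allI impI ballI)
    show "top_hom M (FTop X) \<phi>" by (rule T)
  next
    fix m show "\<phi> 1 m 0 = g m" by (rule U)
  next
    fix \<psi> r m
    assume a: "top_hom M (FTop X) \<psi> \<and> (\<forall>m\<in>topspace (tsp M 1). \<psi> 1 m 0 = g m)"
      and b: "1 \<le> r \<and> m \<in> topspace (tsp M r)"
    have h: "lcm_hom (\<lambda>r. topspace (tsp M r)) (tact M) (tcomp M)
       (\<lambda>r. PiE {..<r} (\<lambda>_. topspace X)) (\<lambda>r \<sigma> x. restrict (x \<circ> \<sigma>) {..<r})
       (\<lambda>r i s x. restrict (x \<circ> delta i s) {..<r + s - 1}) \<psi>"
      using a unfolding top_hom_def FTop_def by simp
    show "\<psi> r m = \<phi> r m"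
      using hom_unique2[OF L h, of g r m] a b unfolding \<phi>_def by blast
  qed
qed




lemma prod_sset:
  assumes X: "is_sset X"
  shows "is_sset \<lparr>scar = (\<lambda>n. PiE {..<r} (\<lambda>_. scar X n)),
                  sface = (\<lambda>n i x. restrict (\<lambda>k. sface X n i (x k)) {..<r}),
                  sdeg = (\<lambda>n i x. restrict (\<lambda>k. sdeg X n i (x k)) {..<r})\<rparr>"
proof -
  note XX = X[unfolded is_sset_def]
  have X1: "\<And>n i x. 1 \<le> n \<Longrightarrow> i \<le> n \<Longrightarrow> x \<in> scar X n \<Longrightarrow> sface X n i x \<in> scar X (n - 1)"
    using XX[ THEN conjunct1, rule_format] by blast
  have X2: "\<And>n i x. i \<le> n \<Longrightarrow> x \<in> scar X n \<Longrightarrow> sdeg X n i x \<in> scar X (Suc n)"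
    using XX[ THEN conjunct2, THEN conjunct1, rule_format] by blast
  have X3: "\<And>n i j x. 2 \<le> n \<Longrightarrow> i < j \<Longrightarrow> j \<le> n \<Longrightarrow> x \<in> scar X n \<Longrightarrow>
        sface X (n - 1) i (sface X n j x) = sface X (n - 1) (j - 1) (sface X n i x)"
    using XX[ THEN conjunct2, THEN conjunct2, THEN conjunct1, rule_format] by blast
  have X4: "\<And>n i j x. i < j \<Longrightarrow> j \<le> n \<Longrightarrow> x \<in> scar X n \<Longrightarrow>
        sface X (Suc n) i (sdeg X n j x) = sdeg X (n - 1) (j - 1) (sface X n i x)"
    using XX[ THEN conjunct2, THEN conjunct2, THEN conjunct2, THEN conjunct1, rule_format] by blast
  have X5: "\<And>n j x. j \<le> n \<Longrightarrow> x \<in> scar X n \<Longrightarrow>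
        sface X (Suc n) j (sdeg X n j x) = x \<and> sface X (Suc n) (Suc j) (sdeg X n j x) = x"
    using XX[ THEN conjunct2, THEN conjunct2, THEN conjunct2, THEN conjunct2, THEN conjunct1, rule_format] by blast
  have X6: "\<And>n i j x. Suc j < i \<Longrightarrow> i \<le> Suc n \<Longrightarrow> x \<in> scar X n \<Longrightarrow>
        sface X (Suc n) i (sdeg X n j x) = sdeg X (n - 1) j (sface X n (i - 1) x)"
    using XX[ THEN conjunct2, THEN conjunct2, THEN conjunct2, THEN conjunct2, THEN conjunct2, THEN conjunct1, rule_format] by blast
  have X7: "\<And>n i j x. i \<le> j \<Longrightarrow> j \<le> n \<Longrightarrow> x \<in> scar X n \<Longrightarrow>
        sdeg X (Suc n) i (sdeg X n j x) = sdeg X (Suc n) (Suc j) (sdeg X n i x)"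
    using XX[ THEN conjunct2, THEN conjunct2, THEN conjunct2, THEN conjunct2, THEN conjunct2, THEN conjunct2, rule_format] by blast
  have mem: "x k \<in> scar X n" if "x \<in> PiE {..<r} (\<lambda>_. scar X n)" "k < r" for x k n
    using that by auto
  show ?thesis unfolding is_sset_def
  proof (intro conjI allI impI; (elim conjE)?; simp only: sset.simps)
    fix n i :: nat and x assume a: "1 \<le> n" "i \<le> n" "x \<in> PiE {..<r} (\<lambda>_. scar X n)"
    show "restrict (\<lambda>k. sface X n i (x k)) {..<r} \<in> PiE {..<r} (\<lambda>_. scar X (n - 1))"
      using X1[OF a(1,2) mem[OF a(3)]] by auto
  next
    fix n i :: nat and x assume a: "i \<le> n" "x \<in> PiE {..<r} (\<lambda>_. scar X n)"
    show "restrict (\<lambda>k. sdeg X n i (x k)) {..<r} \<in> PiE {..<r} (\<lambda>_. scar X (Suc n))"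
      using X2[OF a(1) mem[OF a(2)]] by auto
  next
    fix n i j :: nat and x assume a: "2 \<le> n" "i < j" "j \<le> n" "x \<in> PiE {..<r} (\<lambda>_. scar X n)"
    show "restrict (\<lambda>k. sface X (n - 1) i (restrict (\<lambda>k. sface X n j (x k)) {..<r} k)) {..<r} =
          restrict (\<lambda>k. sface X (n - 1) (j - 1) (restrict (\<lambda>k. sface X n i (x k)) {..<r} k)) {..<r}"
      using X3[OF a(1,2,3) mem[OF a(4)]] by (intro ext) simp
  next
    fix n i j :: nat and x assume a: "i < j" "j \<le> n" "x \<in> PiE {..<r} (\<lambda>_. scar X n)"
    show "restrict (\<lambda>k. sface X (Suc n) i (restrict (\<lambda>k. sdeg X n j (x k)) {..<r} k)) {..<r} =
          restrict (\<lambda>k. sdeg X (n - 1) (j - 1) (restrict (\<lambda>k. sface X n i (x k)) {..<r} k)) {..<r}"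
      using X4[OF a(1,2) mem[OF a(3)]] by (intro ext) simp
  next
    fix n j :: nat and x assume a: "j \<le> n" "x \<in> PiE {..<r} (\<lambda>_. scar X n)"
    show "restrict (\<lambda>k. sface X (Suc n) j (restrict (\<lambda>k. sdeg X n j (x k)) {..<r} k)) {..<r} = x"
      using X5[OF a(1) mem[OF a(2)]] a(2) by (intro ext) (auto simp: PiE_def extensional_def)
  next
    fix n j :: nat and x assume a: "j \<le> n" "x \<in> PiE {..<r} (\<lambda>_. scar X n)"
    show "restrict (\<lambda>k. sface X (Suc n) (Suc j) (restrict (\<lambda>k. sdeg X n j (x k)) {..<r} k)) {..<r} = x"
      using X5[OF a(1) mem[OF a(2)]] a(2) by (intro ext) (auto simp: PiE_def extensional_def)
  next
    fix n i j :: nat and x assume a: "Suc j < i" "i \<le> Suc n" "x \<in> PiE {..<r} (\<lambda>_. scar X n)"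
    show "restrict (\<lambda>k. sface X (Suc n) i (restrict (\<lambda>k. sdeg X n j (x k)) {..<r} k)) {..<r} =
          restrict (\<lambda>k. sdeg X (n - 1) j (restrict (\<lambda>k. sface X n (i - 1) (x k)) {..<r} k)) {..<r}"
      using X6[OF a(1,2) mem[OF a(3)]] by (intro ext) simp
  next
    fix n i j :: nat and x assume a: "i \<le> j" "j \<le> n" "x \<in> PiE {..<r} (\<lambda>_. scar X n)"
    show "restrict (\<lambda>k. sdeg X (Suc n) i (restrict (\<lambda>k. sdeg X n j (x k)) {..<r} k)) {..<r} =
          restrict (\<lambda>k. sdeg X (Suc n) (Suc j) (restrict (\<lambda>k. sdeg X n i (x k)) {..<r} k)) {..<r}"
      using X7[OF a(1,2) mem[OF a(3)]] by (intro ext) simp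
  qed
qed


lemma FSet_mod:
  assumes X: "is_sset X"
  shows "sset_lmod (FSet X)"
  unfolding sset_lmod_def
proof (intro conjI allI impI; (elim conjE)?)
  fix r :: nat show "is_sset (ssp (FSet X) r)" unfolding FSet_def using prod_sset[OF X, of r] by simp
next
  fix n :: nat
  show "lcm_mod (\<lambda>r. scar (ssp (FSet X) r) n) (sact (FSet X) n) (scomp (FSet X) n)"
    unfolding FSet_def using PiE_lcm_mod[of "scar X n"] by simp
next
  fix r :: nat and \<sigma> assume "1 \<le> r" and p: "\<sigma> permutes {..<r}"
  note pl = perm_lt[OF p]
  show "ssmap (ssp (FSet X) r) (ssp (FSet X) r) (\<lambda>n. sact (FSet X) n r \<sigma>)"
    unfolding ssmap_def FSet_def
  proof (intro conjI allI impI; (elim conjE)?; simp only: sset.simps smod.simps)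
    fix n :: nat and x assume "x \<in> PiE {..<r} (\<lambda>_. scar X n)"
    then show "restrict (x \<circ> \<sigma>) {..<r} \<in> PiE {..<r} (\<lambda>_. scar X n)"
      using pl by (auto simp: PiE_iff)
  next
    fix n i :: nat and x
    show "restrict (restrict (\<lambda>k. sface X n i (x k)) {..<r} \<circ> \<sigma>) {..<r} =
       restrict (\<lambda>k. sface X n i (restrict (x \<circ> \<sigma>) {..<r} k)) {..<r}"
      using pl by (intro ext) simp
  next
    fix n i :: nat and x
    show "restrict (restrict (\<lambda>k. sdeg X n i (x k)) {..<r} \<circ> \<sigma>) {..<r} =
       restrict (\<lambda>k. sdeg X n i (restrict (x \<circ> \<sigma>) {..<r} k)) {..<r}"
      using pl by (intro ext) simp
  qed
next
  fix r i s :: nat assume a: "i < r" "2 \<le> r + s"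
  note dl = delta_lt[OF a(1)]
  show "ssmap (ssp (FSet X) r) (ssp (FSet X) (r + s - 1)) (\<lambda>n. scomp (FSet X) n r i s)"
    unfolding ssmap_def FSet_def
  proof (intro conjI allI impI; (elim conjE)?; simp only: sset.simps smod.simps)
    fix n :: nat and x assume "x \<in> PiE {..<r} (\<lambda>_. scar X n)"
    then show "restrict (x \<circ> delta i s) {..<r + s - 1} \<in> PiE {..<r + s - 1} (\<lambda>_. scar X n)"
      using dl by (auto simp: PiE_iff)
  next
    fix n j :: nat and x
    show "restrict (restrict (\<lambda>k. sface X n j (x k)) {..<r} \<circ> delta i s) {..<r + s - 1} =
       restrict (\<lambda>k. sface X n j (restrict (x \<circ> delta i s) {..<r + s - 1} k)) {..<r + s - 1}"
      using dl by (intro ext) simp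
  next
    fix n j :: nat and x
    show "restrict (restrict (\<lambda>k. sdeg X n j (x k)) {..<r} \<circ> delta i s) {..<r + s - 1} =
       restrict (\<lambda>k. sdeg X n j (restrict (x \<circ> delta i s) {..<r + s - 1} k)) {..<r + s - 1}"
      using dl by (intro ext) simp
  qed
qed


lemma sset_part:
  fixes M :: "'m smod" and X :: "'b sset"
  assumes M: "sset_lmod M" and X: "is_sset X" and g: "ssmap (ssp M 1) X g"
  shows "\<exists>\<phi>. sset_hom M (FSet X) \<phi> \<and>
                      (\<forall>n m. m \<in> scar (ssp M 1) n \<longrightarrow> \<phi> n 1 m 0 = g n m) \<and>
                      (\<forall>\<psi>. sset_hom M (FSet X) \<psi> \<and> (\<forall>n m. m \<in> scar (ssp M 1) n \<longrightarrow> \<psi> n 1 m 0 = g n m) \<longrightarrow>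
                           (\<forall>n r m. 1 \<le> r \<and> m \<in> scar (ssp M r) n \<longrightarrow> \<psi> n r m = \<phi> n r m))"
proof -
  define \<phi> where "\<phi> = (\<lambda>n r m. restrict (\<lambda>k. g n (proj (scomp M n) r k m)) {..<r})"
  note MM = M[unfolded sset_lmod_def]
  have L: "\<And>n. lcm_mod (\<lambda>r. scar (ssp M r) n) (sact M n) (scomp M n)"
    using MM[THEN conjunct2, THEN conjunct1] by blast
  have Sc: "\<And>r i s. i < r \<Longrightarrow> 2 \<le> r + s \<Longrightarrow> ssmap (ssp M r) (ssp M (r + s - 1)) (\<lambda>n. scomp M n r i s)"
    using MM[THEN conjunct2, THEN conjunct2, THEN conjunct2] by blast
  note gg = g[unfolded ssmap_def]
  have g1: "\<And>n x. x \<in> scar (ssp M 1) n \<Longrightarrow> g n x \<in> scar X n"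
    using gg[THEN conjunct1] by blast
  have g2: "\<And>n i x. 1 \<le> n \<Longrightarrow> i \<le> n \<Longrightarrow> x \<in> scar (ssp M 1) n \<Longrightarrow> g (n - 1) (sface (ssp M 1) n i x) = sface X n i (g n x)"
    using gg[THEN conjunct2, THEN conjunct1] by blast
  have g3: "\<And>n i x. i \<le> n \<Longrightarrow> x \<in> scar (ssp M 1) n \<Longrightarrow> g (Suc n) (sdeg (ssp M 1) n i x) = sdeg X n i (g n x)"
    using gg[THEN conjunct2, THEN conjunct2] by blast
  have Sf: "\<And>r j n i x. j < r \<Longrightarrow> 2 \<le> r \<Longrightarrow> 1 \<le> n \<Longrightarrow> i \<le> n \<Longrightarrow> x \<in> scar (ssp M r) n \<Longrightarrow>
      sface (ssp M (r - 1)) n i (scomp M n r j 0 x) = scomp M (n - 1) r j 0 (sface (ssp M r) n i x)"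
  proof -
    fix r j n i x assume a: "j < r" "2 \<le> r" "1 \<le> n" "i \<le> n" "x \<in> scar (ssp M r) n"
    have "ssmap (ssp M r) (ssp M (r - 1)) (\<lambda>n. scomp M n r j 0)" using Sc[OF a(1), of 0] a by simp
    then show "sface (ssp M (r - 1)) n i (scomp M n r j 0 x) = scomp M (n - 1) r j 0 (sface (ssp M r) n i x)"
      unfolding ssmap_def using a by metis
  qed
  have Sd: "\<And>r j n i x. j < r \<Longrightarrow> 2 \<le> r \<Longrightarrow> i \<le> n \<Longrightarrow> x \<in> scar (ssp M r) n \<Longrightarrow>
      sdeg (ssp M (r - 1)) n i (scomp M n r j 0 x) = scomp M (Suc n) r j 0 (sdeg (ssp M r) n i x)"
  proof -
    fix r j n i x assume a: "j < r" "2 \<le> r" "i \<le> n" "x \<in> scar (ssp M r) n"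
    have "ssmap (ssp M r) (ssp M (r - 1)) (\<lambda>n. scomp M n r j 0)" using Sc[OF a(1), of 0] a by simp
    then show "sdeg (ssp M (r - 1)) n i (scomp M n r j 0 x) = scomp M (Suc n) r j 0 (sdeg (ssp M r) n i x)"
      unfolding ssmap_def using a by metis
  qed
  have H: "lcm_hom (\<lambda>r. scar (ssp M r) n) (sact M n) (scomp M n)
       (\<lambda>r. scar (ssp (FSet X) r) n) (sact (FSet X) n) (scomp (FSet X) n) (\<phi> n)" for n
    using phi_hom[OF L[of n], of "g n" "scar X n"] g1 unfolding \<phi>_def FSet_def by simp
  have SM: "ssmap (ssp M r) (ssp (FSet X) r) (\<lambda>n. \<phi> n r)" if r: "1 \<le> r" for r
    unfolding ssmap_def
  proof (intro conjI allI impI; (elim conjE)?)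
    fix n x assume "x \<in> scar (ssp M r) n"
    then show "\<phi> n r x \<in> scar (ssp (FSet X) r) n"
      using H[of n, unfolded lcm_hom_def] r by blast
  next
    fix n i x assume a: "1 \<le> n" "i \<le> n" "x \<in> scar (ssp M r) n"
    have pn: "sface (ssp M 1) n i (proj (scomp M n) r k x) = proj (scomp M (n - 1)) r k (sface (ssp M r) n i x)"
      if k: "k < r" for k
      using proj_nat[of "\<lambda>r. scar (ssp M r) n" "\<lambda>r. sface (ssp M r) n i" "scomp M n" "scomp M (n - 1)", OF _ _ r k a(3)]
        Sf a cmp0_in[OF L[of n]] by blast
    show "\<phi> (n - 1) r (sface (ssp M r) n i x) = sface (ssp (FSet X) r) n i (\<phi> n r x)"
      unfolding \<phi>_def FSet_def
      using pn g2[OF a(1,2) proj_in[OF L[of n] r _ a(3)]] by (intro ext) simp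
  next
    fix n i x assume a: "i \<le> n" "x \<in> scar (ssp M r) n"
    have pn: "sdeg (ssp M 1) n i (proj (scomp M n) r k x) = proj (scomp M (Suc n)) r k (sdeg (ssp M r) n i x)"
      if k: "k < r" for k
      using proj_nat[of "\<lambda>r. scar (ssp M r) n" "\<lambda>r. sdeg (ssp M r) n i" "scomp M n" "scomp M (Suc n)", OF _ _ r k a(2)]
        Sd a cmp0_in[OF L[of n]] by blast
    show "\<phi> (Suc n) r (sdeg (ssp M r) n i x) = sdeg (ssp (FSet X) r) n i (\<phi> n r x)"
      unfolding \<phi>_def FSet_def
      using pn g3[OF a(1) proj_in[OF L[of n] r _ a(2)]] by (intro ext) simp
  qed
  have T: "sset_hom M (FSet X) \<phi>" unfolding sset_hom_def using H SM by blast
  show ?thesis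
  proof (intro exI conjI allI impI)
    show "sset_hom M (FSet X) \<phi>" by (rule T)
  next
    fix n m show "\<phi> n 1 m 0 = g n m" unfolding \<phi>_def by (simp add: proj_1)
  next
    fix \<psi> n r m
    assume a: "sset_hom M (FSet X) \<psi> \<and> (\<forall>n m. m \<in> scar (ssp M 1) n \<longrightarrow> \<psi> n 1 m 0 = g n m)"
      and b: "1 \<le> r \<and> m \<in> scar (ssp M r) n"
    have h: "lcm_hom (\<lambda>r. scar (ssp M r) n) (sact M n) (scomp M n)
       (\<lambda>r. PiE {..<r} (\<lambda>_. scar X n)) (\<lambda>r \<sigma> x. restrict (x \<circ> \<sigma>) {..<r})
       (\<lambda>r i s x. restrict (x \<circ> delta i s) {..<r + s - 1}) (\<psi> n)"
      using a unfolding sset_hom_def FSet_def by simp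
    show "\<psi> n r m = \<phi> n r m"
      using hom_unique2[OF L[of n] h, of "g n" r m] a b unfolding \<phi>_def by blast
  qed
qed


theorem lemma4p1:
  shows "(\<forall>(M :: 'm tmod) (X :: 'a topology).
            top_lmod M \<longrightarrow>
              top_lmod (FTop X) \<and>
              (\<forall>g. continuous_map (tsp M 1) X g \<longrightarrow>
                 (\<exists>\<phi>. top_hom M (FTop X) \<phi> \<and>
                      (\<forall>m \<in> topspace (tsp M 1). \<phi> 1 m 0 = g m) \<and>
                      (\<forall>\<psi>. top_hom M (FTop X) \<psi> \<and> (\<forall>m \<in> topspace (tsp M 1). \<psi> 1 m 0 = g m) \<longrightarrow>
                           (\<forall>r m. 1 \<le> r \<and> m \<in> topspace (tsp M r) \<longrightarrow> \<psi> r m = \<phi> r m)))))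
       \<and>
         (\<forall>(M :: 'n smod) (X :: 'b sset).
            sset_lmod M \<and> is_sset X \<longrightarrow>
              sset_lmod (FSet X) \<and>
              (\<forall>g. ssmap (ssp M 1) X g \<longrightarrow>
                 (\<exists>\<phi>. sset_hom M (FSet X) \<phi> \<and>
                      (\<forall>n m. m \<in> scar (ssp M 1) n \<longrightarrow> \<phi> n 1 m 0 = g n m) \<and>
                      (\<forall>\<psi>. sset_hom M (FSet X) \<psi> \<and> (\<forall>n m. m \<in> scar (ssp M 1) n \<longrightarrow> \<psi> n 1 m 0 = g n m) \<longrightarrow>
                           (\<forall>n r m. 1 \<le> r \<and> m \<in> scar (ssp M r) n \<longrightarrow> \<psi> n r m = \<phi> n r m)))))"
  by (intro conjI allI impI; (elim conjE)?; (rule FTop_mod | erule (1) top_part | erule FSet_mod | erule (2) sset_part))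

end
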